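(* Let $G$ be a connected interval graph with a fixed interval representation in which all right endpoints are distinct, and let $V_2$ be the set of vertices with final label 2 in the labeling described in the context. Then for every dominating set $D$ of $G$, $D\leftrightarrow_{|D|+1} V_2$.
   Context: $G$ is given by closed intervals $I_v=[l(v),r(v)]$, $v\in V(G)$, with $uv\in E(G)$ iff $I_u\cap I_v\ne\emptyset$. Labeling procedure, repeated until all vertices are labeled: (1) pick the unlabeled vertex $v_i$ with minimum $r$-value among unlabeled vertices and give it label 1; (2) let $v_j$ be the vertex of $N[v_i]$ with maximum $r$-value (possibly already labeled, possibly $v_j=v_i$) and (re)label $v_j$ with label 2; (3) give label 3 to every still unlabeled vertex of $N(v_j)$. $N[v]$, $N(v)$ are closed and open neighbourhoods. A set $D\subseteq V(G)$ is a dominating set if every vertex is in $D$ or adjacent to a vertex of $D$. Two dominating sets $D,D'$ are adjacent if $|D\triangle D'|=1$. For dominating sets $D_p,D_q$ and an integer $k>0$, write $D_p\leftrightarrow_k D_q$ if there is a sequence $D_0=D_p,\dots,D_\ell=D_q$ ($\ell\ge0$) of dominating sets of $G$ with consecutive sets adjacent and $|D_i|\le k$ for all $i$. *)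

theory Defs
  imports Complex_Main
begin

definition iadj :: "'a set \<Rightarrow> ('a \<Rightarrow> real) \<Rightarrow> ('a \<Rightarrow> real) \<Rightarrow> 'a \<Rightarrow> 'a \<Rightarrow> bool" where
  "iadj V l r u v \<longleftrightarrow> u \<in> V \<and> v \<in> V \<and> u \<noteq> v \<and> {l u..r u} \<inter> {l v..r v} \<noteq> {}"

definition open_nbhd :: "'a set \<Rightarrow> ('a \<Rightarrow> real) \<Rightarrow> ('a \<Rightarrow> real) \<Rightarrow> 'a \<Rightarrow> 'a set" where
  "open_nbhd V l r v = {u \<in> V. iadj V l r v u}"

definition closed_nbhd :: "'a set \<Rightarrow> ('a \<Rightarrow> real) \<Rightarrow> ('a \<Rightarrow> real) \<Rightarrow> 'a \<Rightarrow> 'a set" where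
  "closed_nbhd V l r v = insert v (open_nbhd V l r v)"

definition connected_graph :: "'a set \<Rightarrow> ('a \<Rightarrow> real) \<Rightarrow> ('a \<Rightarrow> real) \<Rightarrow> bool" where
  "connected_graph V l r \<longleftrightarrow> (\<forall>u\<in>V. \<forall>v\<in>V. (iadj V l r)\<^sup>*\<^sup>* u v)"

definition dominating :: "'a set \<Rightarrow> ('a \<Rightarrow> real) \<Rightarrow> ('a \<Rightarrow> real) \<Rightarrow> 'a set \<Rightarrow> bool" where
  "dominating V l r D \<longleftrightarrow> D \<subseteq> V \<and> (\<forall>v\<in>V. v \<in> D \<or> (\<exists>u\<in>D. iadj V l r u v))"

definition sym_diff :: "'a set \<Rightarrow> 'a set \<Rightarrow> 'a set" where
  "sym_diff A B = (A - B) \<union> (B - A)"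

definition reconf :: "'a set \<Rightarrow> ('a \<Rightarrow> real) \<Rightarrow> ('a \<Rightarrow> real) \<Rightarrow> nat \<Rightarrow> 'a set \<Rightarrow> 'a set \<Rightarrow> bool" where
  "reconf V l r k Dp Dq \<longleftrightarrow>
     (\<exists>xs :: 'a set list. xs \<noteq> [] \<and> hd xs = Dp \<and> last xs = Dq \<and>
        (\<forall>D \<in> set xs. dominating V l r D \<and> card D \<le> k) \<and>
        (\<forall>i. Suc i < length xs \<longrightarrow> card (sym_diff (xs ! i) (xs ! Suc i)) = 1))"

text \<open>Labels: 0 = unlabeled, 1, 2, 3.
One round: v_i = unlabeled vertex with minimum r; label it 1;
v_j = vertex of N[v_i] with maximum r; (re)label it 2;
every still unlabeled vertex of N(v_j) gets label 3.
If no vertex is unlabeled, the round does nothing.\<close>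
definition label_step :: "'a set \<Rightarrow> ('a \<Rightarrow> real) \<Rightarrow> ('a \<Rightarrow> real) \<Rightarrow> ('a \<Rightarrow> nat) \<Rightarrow> ('a \<Rightarrow> nat)" where
  "label_step V l r lab =
     (let U = {v \<in> V. lab v = 0} in
      if U = {} then lab else
      (let vi = (THE v. v \<in> U \<and> (\<forall>u\<in>U. r v \<le> r u));
           lab1 = lab(vi := 1);
           vj = (THE v. v \<in> closed_nbhd V l r vi \<and> (\<forall>u\<in>closed_nbhd V l r vi. r u \<le> r v));
           lab2 = lab1(vj := 2)
       in (\<lambda>u. if u \<in> open_nbhd V l r vj \<and> lab2 u = 0 then 3 else lab2 u)))"

text \<open>Each round labels at least one new vertex, so card V rounds suffice.\<close>
definition final_labels :: "'a set \<Rightarrow> ('a \<Rightarrow> real) \<Rightarrow> ('a \<Rightarrow> real) \<Rightarrow> 'a \<Rightarrow> nat" where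
  "final_labels V l r = (label_step V l r ^^ card V) (\<lambda>_. 0)"

definition V2 :: "'a set \<Rightarrow> ('a \<Rightarrow> real) \<Rightarrow> ('a \<Rightarrow> real) \<Rightarrow> 'a set" where
  "V2 V l r = {v \<in> V. final_labels V l r v = 2}"

end

theory Submission
  imports Defs
begin

lemma reconf_alt:
  "reconf V l r K A B \<longleftrightarrow> (\<exists>xs. xs \<noteq> [] \<and> hd xs = A \<and> last xs = B \<and>
     (\<forall>D\<in>set xs. dominating V l r D \<and> card D \<le> K) \<and>
     successively (\<lambda>X Y. card (sym_diff X Y) = 1) xs)"
  by (simp add: reconf_def successively_conv_nth)

lemma reconf_refl: "dominating V l r A \<Longrightarrow> card A \<le> K \<Longrightarrow> reconf V l r K A A"
  unfolding reconf_alt by (rule exI[of _ "[A]"]) auto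

lemma reconf_one: "dominating V l r A \<Longrightarrow> card A \<le> K \<Longrightarrow> dominating V l r B \<Longrightarrow> card B \<le> K
  \<Longrightarrow> card (sym_diff A B) = 1 \<Longrightarrow> reconf V l r K A B"
  unfolding reconf_alt by (rule exI[of _ "[A,B]"]) auto

lemma reconf_trans:
  assumes "reconf V l r K A B" "reconf V l r K B C" shows "reconf V l r K A C"
proof -
  obtain xs where xs: "xs \<noteq> []" "hd xs = A" "last xs = B"
     "\<forall>D\<in>set xs. dominating V l r D \<and> card D \<le> K"
     "successively (\<lambda>X Y. card (sym_diff X Y) = 1) xs"
    using assms(1) unfolding reconf_alt by blast
  obtain ys where ys: "ys \<noteq> []" "hd ys = B" "last ys = C"
     "\<forall>D\<in>set ys. dominating V l r D \<and> card D \<le> K"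
     "successively (\<lambda>X Y. card (sym_diff X Y) = 1) ys"
    using assms(2) unfolding reconf_alt by blast
  obtain y ys' where ysc: "ys = y # ys'" using ys(1) by (cases ys) auto
  show ?thesis unfolding reconf_alt
  proof (rule exI[of _ "xs @ ys'"], intro conjI)
    show "xs @ ys' \<noteq> []" using xs by simp
    show "hd (xs @ ys') = A" using xs by simp
    show "last (xs @ ys') = C" using xs ys ysc by (cases ys') auto
    show "\<forall>D\<in>set (xs @ ys'). dominating V l r D \<and> card D \<le> K" using xs ys ysc by auto
    show "successively (\<lambda>X Y. card (sym_diff X Y) = 1) (xs @ ys')"
      using xs ys ysc by (auto simp: successively_append_iff successively_Cons)
  qed
qed

lemma sym_diff_insert: "x \<notin> A \<Longrightarrow> sym_diff A (insert x A) = {x}"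
  unfolding sym_diff_def by auto

lemma sym_diff_insert': "x \<notin> A \<Longrightarrow> sym_diff (insert x A) A = {x}"
  unfolding sym_diff_def by auto

lemma dominating_mono: "dominating V l r A \<Longrightarrow> A \<subseteq> B \<Longrightarrow> B \<subseteq> V \<Longrightarrow> dominating V l r B"
  unfolding dominating_def by blast

lemma reconf_up:
  assumes "finite F" "F \<subseteq> V" "finite A" "dominating V l r A" "card (A \<union> F) \<le> K"
  shows "reconf V l r K A (A \<union> F)"
  using assms
proof (induction F rule: finite_induct)
  case empty then show ?case by (simp add: reconf_refl)
next
  case (insert x F)
  have c1: "card (A \<union> F) \<le> K"
    by (rule le_trans[OF _ insert.prems(4)]) (rule card_mono, use insert in auto)
  have AV: "A \<subseteq> V" using insert.prems unfolding dominating_def by auto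
  have r1: "reconf V l r K A (A \<union> F)" using insert c1 by auto
  show ?case
  proof (cases "x \<in> A \<union> F")
    case True then show ?thesis using r1 by (simp add: insert_absorb)
  next
    case False
    have d1: "dominating V l r (A \<union> F)" using insert AV by (intro dominating_mono[OF insert.prems(3)]) auto
    have d2: "dominating V l r (A \<union> insert x F)" using insert AV by (intro dominating_mono[OF insert.prems(3)]) auto
    have "reconf V l r K (A \<union> F) (insert x (A \<union> F))"
      by (rule reconf_one) (use d1 d2 c1 insert False in \<open>auto simp: sym_diff_insert\<close>)
    then show ?thesis using reconf_trans[OF r1] by simp
  qed
qed

lemma reconf_down:
  assumes "finite F" "F \<subseteq> V" "finite B" "dominating V l r B" "card (B \<union> F) \<le> K"
  shows "reconf V l r K (B \<union> F) B"
  using assms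
proof (induction F rule: finite_induct)
  case empty then show ?case by (simp add: reconf_refl)
next
  case (insert x F)
  have c1: "card (B \<union> F) \<le> K"
    by (rule le_trans[OF _ insert.prems(4)]) (rule card_mono, use insert in auto)
  have AV: "B \<subseteq> V" using insert.prems unfolding dominating_def by auto
  have r1: "reconf V l r K (B \<union> F) B" using insert c1 by auto
  show ?case
  proof (cases "x \<in> B \<union> F")
    case True then show ?thesis using r1 by (simp add: insert_absorb)
  next
    case False
    have d1: "dominating V l r (B \<union> F)" using insert AV by (intro dominating_mono[OF insert.prems(3)]) auto
    have d2: "dominating V l r (B \<union> insert x F)" using insert AV by (intro dominating_mono[OF insert.prems(3)]) auto
    have "reconf V l r K (insert x (B \<union> F)) (B \<union> F)"
      by (rule reconf_one) (use d1 d2 c1 insert False in \<open>auto simp: sym_diff_insert'\<close>)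
    then show ?thesis using reconf_trans[OF _ r1] by simp
  qed
qed

lemma reconf_via:
  assumes "finite V" "dominating V l r A" "dominating V l r B" "card (A \<union> B) \<le> K"
  shows "reconf V l r K A B"
proof -
  have AV: "A \<subseteq> V" "B \<subseteq> V" using assms unfolding dominating_def by auto
  have fin: "finite A" "finite B" using AV assms(1) finite_subset by auto
  have "reconf V l r K A (A \<union> B)" by (rule reconf_up) (use assms AV fin in auto)
  moreover have "reconf V l r K (B \<union> A) B" by (rule reconf_down) (use assms AV fin in \<open>auto simp: Un_commute\<close>)
  ultimately show ?thesis using reconf_trans by (metis Un_commute)
qed

definition mt :: "('a \<Rightarrow> real) \<Rightarrow> ('a \<Rightarrow> real) \<Rightarrow> 'a \<Rightarrow> 'a \<Rightarrow> bool" where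
  "mt l r u v \<longleftrightarrow> l u \<le> r v \<and> l v \<le> r u"

lemma mt_sym: "mt l r u v \<longleftrightarrow> mt l r v u" unfolding mt_def by auto

lemma inter_mt:
  fixes l r :: "'a \<Rightarrow> real"
  assumes "l u \<le> r u" "l v \<le> r v"
  shows "({l u..r u} \<inter> {l v..r v} \<noteq> {}) \<longleftrightarrow> mt l r u v"
proof
  assume "{l u..r u} \<inter> {l v..r v} \<noteq> {}"
  then obtain x where "x \<in> {l u..r u}" "x \<in> {l v..r v}" by blast
  then show "mt l r u v" unfolding mt_def by auto
next
  assume "mt l r u v"
  then have "max (l u) (l v) \<in> {l u..r u} \<inter> {l v..r v}" using assms unfolding mt_def by auto
  then show "{l u..r u} \<inter> {l v..r v} \<noteq> {}" by blast
qed

lemma iadj_mt: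
  assumes LR: "\<forall>v\<in>V. l v \<le> r v" and "u \<in> V" "v \<in> V"
  shows "iadj V l r u v \<longleftrightarrow> u \<noteq> v \<and> mt l r u v"
  using assms inter_mt[of l u r v] unfolding iadj_def by auto

lemma closed_nbhd_mt:
  assumes LR: "\<forall>v\<in>V. l v \<le> r v" and "v \<in> V"
  shows "closed_nbhd V l r v = {u\<in>V. mt l r v u}"
  using assms iadj_mt[OF LR] unfolding closed_nbhd_def open_nbhd_def mt_def by auto

lemma dominating_mt:
  assumes LR: "\<forall>v\<in>V. l v \<le> r v"
  shows "dominating V l r D \<longleftrightarrow> D \<subseteq> V \<and> (\<forall>v\<in>V. \<exists>u\<in>D. mt l r u v)"
proof
  assume d: "dominating V l r D"
  show "D \<subseteq> V \<and> (\<forall>v\<in>V. \<exists>u\<in>D. mt l r u v)"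
  proof (intro conjI ballI)
    show "D \<subseteq> V" using d unfolding dominating_def by auto
    fix v assume v: "v \<in> V"
    show "\<exists>u\<in>D. mt l r u v"
    proof (cases "v \<in> D")
      case True then show ?thesis using LR v unfolding mt_def by auto
    next
      case False
      then obtain u where "u \<in> D" "iadj V l r u v" using d v unfolding dominating_def by auto
      then show ?thesis using iadj_mt[OF LR] unfolding iadj_def by auto
    qed
  qed
next
  assume d: "D \<subseteq> V \<and> (\<forall>v\<in>V. \<exists>u\<in>D. mt l r u v)"
  show "dominating V l r D" unfolding dominating_def
  proof (intro conjI ballI)
    show "D \<subseteq> V" using d by auto
    fix v assume v: "v \<in> V"
    then obtain u where "u \<in> D" "mt l r u v" using d by auto
    then show "v \<in> D \<or> (\<exists>u\<in>D. iadj V l r u v)" using iadj_mt[OF LR, of u v] d v by auto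
  qed
qed

lemma unique_min:
  fixes r :: "'a \<Rightarrow> real"
  assumes "finite U" "U \<noteq> {}" "inj_on r U"
  shows "\<exists>!v. v \<in> U \<and> (\<forall>u\<in>U. r v \<le> r u)"
proof -
  obtain m where m: "m \<in> r ` U" "\<not>(\<exists>x\<in>r ` U. x < m)" using ex_min_if_finite[of "r ` U"] assms by auto
  then obtain v where v: "v \<in> U" "r v = m" by auto
  have "v \<in> U \<and> (\<forall>u\<in>U. r v \<le> r u)" using v m by force
  moreover have "w = v" if "w \<in> U \<and> (\<forall>u\<in>U. r w \<le> r u)" for w
    using that v \<open>v \<in> U \<and> (\<forall>u\<in>U. r v \<le> r u)\<close> assms(3) by (meson inj_onD order_antisym)
  ultimately show ?thesis by blast
qed

lemma unique_max:
  fixes r :: "'a \<Rightarrow> real"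
  assumes "finite U" "U \<noteq> {}" "inj_on r U"
  shows "\<exists>!v. v \<in> U \<and> (\<forall>u\<in>U. r u \<le> r v)"
proof -
  define m where "m = Max (r ` U)"
  have m: "m \<in> r ` U" "\<not>(\<exists>x\<in>r ` U. m < x)" unfolding m_def using assms by (auto simp: Max_in)
  then obtain v where v: "v \<in> U" "r v = m" by auto
  have "v \<in> U \<and> (\<forall>u\<in>U. r u \<le> r v)" using v m by force
  moreover have "w = v" if "w \<in> U \<and> (\<forall>u\<in>U. r u \<le> r w)" for w
    using that v \<open>v \<in> U \<and> (\<forall>u\<in>U. r u \<le> r v)\<close> assms(3) by (meson inj_onD order_antisym)
  ultimately show ?thesis by blast
qed

lemma step_empty: "{v \<in> V. lab v = 0} = {} \<Longrightarrow> label_step V l r lab = lab"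
  unfolding label_step_def Let_def by simp

lemma step_props:
  assumes fin: "finite V" and LR: "\<forall>v\<in>V. l v \<le> r v" and inj: "inj_on r V"
    and ne: "{v \<in> V. lab v = 0} \<noteq> {}"
  shows "\<exists>vi vj. vi \<in> V \<and> lab vi = 0 \<and> (\<forall>u\<in>V. lab u = 0 \<longrightarrow> r vi \<le> r u) \<and> vj \<in> V \<and> mt l r vi vj
     \<and> (\<forall>u\<in>V. mt l r vi u \<longrightarrow> r u \<le> r vj)
     \<and> (\<forall>v\<in>V. (label_step V l r lab v = 0 \<longleftrightarrow> lab v = 0 \<and> \<not> mt l r vj v)
                \<and> (label_step V l r lab v = 2 \<longleftrightarrow> lab v = 2 \<or> v = vj))"
proof -
  define U where "U = {v \<in> V. lab v = 0}"
  define vi where "vi = (THE v. v \<in> U \<and> (\<forall>u\<in>U. r v \<le> r u))"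
  have "\<exists>!v. v \<in> U \<and> (\<forall>u\<in>U. r v \<le> r u)"
    by (rule unique_min) (use fin ne inj in \<open>auto simp: U_def intro: inj_on_subset\<close>)
  then have "vi \<in> U \<and> (\<forall>u\<in>U. r vi \<le> r u)" unfolding vi_def by (rule theI')
  then have vi: "vi \<in> U" "\<forall>u\<in>U. r vi \<le> r u" by blast+
  have viV: "vi \<in> V" using vi U_def by auto
  define N where "N = closed_nbhd V l r vi"
  have N: "N = {u\<in>V. mt l r vi u}" unfolding N_def using closed_nbhd_mt[OF LR viV] .
  define vj where "vj = (THE v. v \<in> N \<and> (\<forall>u\<in>N. r u \<le> r v))"
  have "\<exists>!v. v \<in> N \<and> (\<forall>u\<in>N. r u \<le> r v)"
    by (rule unique_max) (use fin viV inj LR in \<open>auto simp: N mt_def intro: inj_on_subset\<close>)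
  then have "vj \<in> N \<and> (\<forall>u\<in>N. r u \<le> r vj)" unfolding vj_def by (rule theI')
  then have vj: "vj \<in> N" "\<forall>u\<in>N. r u \<le> r vj" by blast+
  have eq: "label_step V l r lab = (\<lambda>u. if u \<in> open_nbhd V l r vj \<and> (lab(vi := 1, vj := 2)) u = 0 then 3 else (lab(vi := 1, vj := 2)) u)"
    using ne unfolding label_step_def Let_def U_def[symmetric] vi_def[symmetric] N_def[symmetric] vj_def[symmetric]
    by simp
  have vjV: "vj \<in> V" and mij: "mt l r vi vj" using vj N by auto
  have on: "u \<in> open_nbhd V l r vj \<longleftrightarrow> u \<in> V \<and> u \<noteq> vj \<and> mt l r vj u" for u
    unfolding open_nbhd_def using iadj_mt[OF LR vjV, of u] iadj_def by auto
  have mji: "mt l r vj vi" using mij mt_sym by metis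
  have A1: "vi \<in> V" "lab vi = 0" "vj \<in> V" "mt l r vi vj" using vi viV vjV mij U_def by auto
  have A2: "\<forall>u\<in>V. lab u = 0 \<longrightarrow> r vi \<le> r u" using vi U_def by auto
  have A3: "\<forall>u\<in>V. mt l r vi u \<longrightarrow> r u \<le> r vj" using vj N by auto
  have mjj: "mt l r vj vj" using LR vjV unfolding mt_def by auto
  have A4: "label_step V l r lab v = 0 \<longleftrightarrow> lab v = 0 \<and> \<not> mt l r vj v" if v: "v \<in> V" for v
  proof (cases "v = vj")
    case True then show ?thesis unfolding eq using mjj by simp
  next
    case F1: False
    show ?thesis
    proof (cases "v = vi")
      case True then show ?thesis unfolding eq using F1 mji by simp
    next
      case False then show ?thesis unfolding eq using F1 on[of v] v by auto
    qed
  qed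
  have A5: "label_step V l r lab v = 2 \<longleftrightarrow> lab v = 2 \<or> v = vj" if v: "v \<in> V" for v
    unfolding eq using on[of v] v A1(2) by auto
  show ?thesis
    apply (rule exI[of _ vi])
    apply (rule exI[of _ vj])
    using A1 A2 A3 A4 A5 by blast
qed

theorem lemma13:
  fixes V :: "'a set" and l r :: "'a \<Rightarrow> real"
  assumes "finite V"
    and "\<forall>v\<in>V. l v \<le> r v"
    and "inj_on r V"
    and "connected_graph V l r"
    and "dominating V l r D"
  shows "reconf V l r (card D + 1) D (V2 V l r)"
proof -
  note fin = assms(1) and LR = assms(2) and inj = assms(3) and dD = assms(5)
  define L where "L k = (label_step V l r ^^ k) (\<lambda>_. 0)" for k
  define S where "S k = {v\<in>V. L k v = 2}" for k
  define U where "U k = {v\<in>V. L k v = 0}" for k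
  define K where "K = card D + 1"
  have DV: "D \<subseteq> V" using dD unfolding dominating_def by auto
  have finD: "finite D" using DV fin finite_subset by auto
  have LS: "L (Suc k) = label_step V l r (L k)" for k unfolding L_def by simp
  have main: "(\<forall>v\<in>V. L k v \<noteq> 0 \<longleftrightarrow> (\<exists>s\<in>S k. mt l r s v)) \<and> (card (U k) + k \<le> card V \<or> U k = {})
     \<and> (\<exists>E\<subseteq>D. card E + card (S k) \<le> card D \<and> dominating V l r (E \<union> S k) \<and> reconf V l r K D (E \<union> S k))" for k
  proof (induction k)
    case 0
    have "L 0 = (\<lambda>_. 0)" unfolding L_def by simp
    then have S0: "S 0 = {}" and U0: "U 0 = V" unfolding S_def U_def by auto
    have a: "\<forall>v\<in>V. L 0 v \<noteq> 0 \<longleftrightarrow> (\<exists>s\<in>S 0. mt l r s v)" using S0 \<open>L 0 = (\<lambda>_. 0)\<close> by simp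
    have b: "card (U 0) + 0 \<le> card V \<or> U 0 = {}" using U0 by simp
    have c: "card D + card (S 0) \<le> card D" using S0 by simp
    have e: "reconf V l r K D (D \<union> S 0)" using S0 reconf_refl[OF dD, of K] K_def by simp
    have f: "\<exists>E\<subseteq>D. card E + card (S 0) \<le> card D \<and> dominating V l r (E \<union> S 0) \<and> reconf V l r K D (E \<union> S 0)"
      apply (rule exI[of _ D])
      using c e dD S0 by simp
    show ?case using a b f by (intro conjI)
  next
    case (Suc k)
    have IH1: "\<forall>v\<in>V. L k v \<noteq> 0 \<longleftrightarrow> (\<exists>s\<in>S k. mt l r s v)" using Suc by blast
    have IH2: "card (U k) + k \<le> card V \<or> U k = {}" using Suc by blast
    obtain E where E: "E \<subseteq> D" "card E + card (S k) \<le> card D" "dominating V l r (E \<union> S k)"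
      "reconf V l r K D (E \<union> S k)" using Suc by blast
    show ?case
    proof (cases "U k = {}")
      case True
      then have "L (Suc k) = L k" unfolding LS using step_empty U_def by metis
      then have "S (Suc k) = S k" "U (Suc k) = U k" unfolding S_def U_def by auto
      have a: "\<forall>v\<in>V. L (Suc k) v \<noteq> 0 \<longleftrightarrow> (\<exists>s\<in>S (Suc k). mt l r s v)"
        using IH1 \<open>L (Suc k) = L k\<close> \<open>S (Suc k) = S k\<close> by simp
      have b: "U (Suc k) = {}" using True \<open>U (Suc k) = U k\<close> by simp
      show ?thesis using a b E \<open>S (Suc k) = S k\<close> by metis
    next
      case False
      then obtain vi vj where P: "vi \<in> V" "L k vi = 0" "\<forall>u\<in>V. L k u = 0 \<longrightarrow> r vi \<le> r u" "vj \<in> V" "mt l r vi vj"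
        "\<forall>u\<in>V. mt l r vi u \<longrightarrow> r u \<le> r vj"
        "\<forall>v\<in>V. (L (Suc k) v = 0 \<longleftrightarrow> L k v = 0 \<and> \<not> mt l r vj v) \<and> (L (Suc k) v = 2 \<longleftrightarrow> L k v = 2 \<or> v = vj)"
        using step_props[OF fin LR inj, of "L k"] unfolding LS U_def by blast
      have S': "S (Suc k) = insert vj (S k)" unfolding S_def using P by auto
      have U': "U (Suc k) \<subseteq> U k - {vi}"
      proof
        fix v assume "v \<in> U (Suc k)"
        then have v: "v \<in> V" "L (Suc k) v = 0" unfolding U_def by auto
        then have "L k v = 0" "\<not> mt l r vj v" using P(7) by blast+
        moreover have "mt l r vj vi" using P(5) mt_sym by metis
        ultimately show "v \<in> U k - {vi}" using v unfolding U_def by auto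
      qed
      have finU: "finite (U k)" unfolding U_def using fin by auto
      have viU: "vi \<in> U k" unfolding U_def using P by auto
      have "card (U (Suc k)) < card (U k)"
      proof -
        have "card (U k) > 0" using finU viU card_gt_0_iff by blast
        then have "card (U k - {vi}) < card (U k)" using finU viU by simp
        moreover have "card (U (Suc k)) \<le> card (U k - {vi})" using U' finU by (intro card_mono) auto
        ultimately show ?thesis by linarith
      qed
      then have C2: "card (U (Suc k)) + Suc k \<le> card V \<or> U (Suc k) = {}" using IH2 False by auto
      have C1: "\<forall>v\<in>V. L (Suc k) v \<noteq> 0 \<longleftrightarrow> (\<exists>s\<in>S (Suc k). mt l r s v)"
      proof
        fix v assume v: "v \<in> V"
        have "L (Suc k) v = 0 \<longleftrightarrow> L k v = 0 \<and> \<not> mt l r vj v" using P(7) v by blast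
        then have "L (Suc k) v \<noteq> 0 \<longleftrightarrow> L k v \<noteq> 0 \<or> mt l r vj v" by simp
        then show "L (Suc k) v \<noteq> 0 \<longleftrightarrow> (\<exists>s\<in>S (Suc k). mt l r s v)"
          unfolding S' using IH1 v by auto
      qed
      have domE: "E \<union> S k \<subseteq> V" "\<forall>v\<in>V. \<exists>u\<in>E \<union> S k. mt l r u v" using E(3) dominating_mt[OF LR] by auto
      obtain d where d: "d \<in> E \<union> S k" "mt l r d vi" using domE(2) P(1) by blast
      have dnS: "d \<notin> S k"
      proof
        assume "d \<in> S k"
        then have "L k vi \<noteq> 0" using IH1 P(1) d(2) by blast
        then show False using P(2) by simp
      qed
      then have dE: "d \<in> E" using d by auto
      have dV: "d \<in> V" using dE E DV by auto
      define E' where "E' = E - {d}"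
      have finE: "finite E" using E finD finite_subset by auto
      have finS: "finite (S k)" unfolding S_def using fin by auto
      have cE': "card E' = card E - 1" unfolding E'_def using dE finE by auto
      have cE: "card E \<ge> 1" using dE finE by (metis One_nat_def Suc_leI card_gt_0_iff empty_iff)
      have cS': "card (S (Suc k)) \<le> card (S k) + 1" unfolding S' using finS card_insert_le_m1
        by (simp add: card_insert_if)
      have C3a: "card E' + card (S (Suc k)) \<le> card D" using cE' cE cS' E(2) by linarith
      have "mt l r vi d" using d(2) unfolding mt_def by auto
      then have rd: "r d \<le> r vj" using P(6) dV by blast
      have rvi: "r vi \<le> r vj" using P(6) P(1) LR unfolding mt_def by auto
      have dom': "dominating V l r (E' \<union> S (Suc k))"
        unfolding dominating_mt[OF LR]
      proof (intro conjI ballI)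
        show "E' \<union> S (Suc k) \<subseteq> V" using domE(1) P(4) S' unfolding E'_def by auto
        fix v assume v: "v \<in> V"
        obtain e where e: "e \<in> E \<union> S k" "mt l r e v" using domE(2) v by blast
        show "\<exists>u\<in>E' \<union> S (Suc k). mt l r u v"
        proof (cases "e = d")
          case False then show ?thesis using e S' unfolding E'_def by auto
        next
          case True
          show ?thesis
          proof (cases "L k v = 0")
            case False then show ?thesis using IH1 v S' by auto
          next
            case z: True
            have "r vi \<le> r v" using P(3) v z by auto
            moreover have "l vj \<le> r vi" using P(5) unfolding mt_def by auto
            moreover have "l d \<le> r v" "l v \<le> r d" using e True unfolding mt_def by auto
            moreover have "l v \<le> r v" using LR v by auto
            ultimately have "mt l r vj v" using rd unfolding mt_def by linarith
            then show ?thesis using S' by auto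
          qed
        qed
      qed
      have "card ((E \<union> S k) \<union> (E' \<union> S (Suc k))) \<le> K"
      proof -
        have "(E \<union> S k) \<union> (E' \<union> S (Suc k)) \<subseteq> insert vj (E \<union> S k)" unfolding E'_def S' by auto
        then have "card ((E \<union> S k) \<union> (E' \<union> S (Suc k))) \<le> card (insert vj (E \<union> S k))"
          by (rule card_mono[rotated]) (use finE finS in auto)
        also have "\<dots> \<le> card (E \<union> S k) + 1" using finE finS by (simp add: card_insert_if)
        also have "\<dots> \<le> card E + card (S k) + 1" using card_Un_le[of E "S k"] by linarith
        finally show ?thesis using E(2) K_def by linarith
      qed
      then have "reconf V l r K (E \<union> S k) (E' \<union> S (Suc k))"
        by (intro reconf_via[OF fin E(3) dom'])
      then have C3: "reconf V l r K D (E' \<union> S (Suc k))" by (rule reconf_trans[OF E(4)])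
      have E'D: "E' \<subseteq> D" using E(1) unfolding E'_def by auto
      have C4: "\<exists>E\<subseteq>D. card E + card (S (Suc k)) \<le> card D \<and> dominating V l r (E \<union> S (Suc k)) \<and> reconf V l r K D (E \<union> S (Suc k))"
        apply (rule exI[of _ E'])
        using E'D C3a dom' C3 by (intro conjI)
      show ?thesis using C1 C2 C4 by (intro conjI)
    qed
  qed
  define n where "n = card V"
  note M = main[of n]
  have M1: "\<forall>v\<in>V. L n v \<noteq> 0 \<longleftrightarrow> (\<exists>s\<in>S n. mt l r s v)" using M by (rule conjunct1)
  have M2: "card (U n) + n \<le> card V \<or> U n = {}" using M by (elim conjE)
  have M3: "\<exists>E\<subseteq>D. card E + card (S n) \<le> card D \<and> dominating V l r (E \<union> S n) \<and> reconf V l r K D (E \<union> S n)"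
    using M by (elim conjE)
  have finU: "finite (U n)" unfolding U_def using fin by auto
  have Un: "U n = {}"
  proof (cases "U n = {}")
    case False
    then have "card (U n) > 0" using finU by auto
    then show ?thesis using M2 unfolding n_def by linarith
  qed
  obtain E where E: "E \<subseteq> D" "card E + card (S n) \<le> card D" "dominating V l r (E \<union> S n)"
      "reconf V l r K D (E \<union> S n)" using M3 by blast
  have Lf: "L n = final_labels V l r" unfolding L_def n_def final_labels_def by (rule refl)
  have V2: "V2 V l r = S n" unfolding V2_def S_def Lf by (rule refl)
  have "\<forall>v\<in>V. L n v \<noteq> 0" using Un unfolding U_def by auto
  then have "\<forall>v\<in>V. \<exists>s\<in>S n. mt l r s v" using M1 by blast
  moreover have "S n \<subseteq> V" unfolding S_def by auto
  ultimately have domS: "dominating V l r (S n)" unfolding dominating_mt[OF LR] by blast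
  have "(E \<union> S n) \<union> S n = E \<union> S n" by blast
  moreover have "card (E \<union> S n) \<le> K" using card_Un_le[of E "S n"] E(2) unfolding K_def by linarith
  ultimately have "card ((E \<union> S n) \<union> S n) \<le> K" by (simp only:)
  then have "reconf V l r K (E \<union> S n) (S n)" by (rule reconf_via[OF fin E(3) domS])
  from reconf_trans[OF E(4) this] have "reconf V l r K D (S n)" .
  then show ?thesis using V2 K_def by simp
qed

end
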